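(* Let $X$ be a distance-regular graph of diameter $4$ on $n$ vertices that is both bipartite and antipodal. Then $\mathrm{motion}(X)\geq 0.15\,n$.
   Context: A distance-regular graph of diameter $d$ is a connected graph such that for vertices $v,w$ at distance $i$ the numbers of neighbours of $w$ at distance $i-1,i,i+1$ from $v$ are constants depending only on $i$. It is antipodal if being at distance $d$ or equal is an equivalence relation on vertices. The motion of a graph is the minimum, over non-identity automorphisms, of the number of vertices not fixed. *)

theory Defs
  imports Main "HOL-Library.Extended_Nat"
begin

definition simple_graph :: "'a set \<Rightarrow> ('a \<Rightarrow> 'a \<Rightarrow> bool) \<Rightarrow> bool" where
  "simple_graph V E \<longleftrightarrow> finite V \<and> V \<noteq> {} \<and>
     (\<forall>u v. E u v \<longrightarrow> u \<in> V \<and> v \<in> V) \<and>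
     (\<forall>u v. E u v \<longrightarrow> E v u) \<and> (\<forall>u. \<not> E u u)"

definition is_walk :: "'a set \<Rightarrow> ('a \<Rightarrow> 'a \<Rightarrow> bool) \<Rightarrow> 'a list \<Rightarrow> bool" where
  "is_walk V E xs \<longleftrightarrow> xs \<noteq> [] \<and> set xs \<subseteq> V \<and>
     (\<forall>i. Suc i < length xs \<longrightarrow> E (xs ! i) (xs ! Suc i))"

definition connected_graph :: "'a set \<Rightarrow> ('a \<Rightarrow> 'a \<Rightarrow> bool) \<Rightarrow> bool" where
  "connected_graph V E \<longleftrightarrow> (\<forall>u\<in>V. \<forall>v\<in>V. \<exists>xs. is_walk V E xs \<and> hd xs = u \<and> last xs = v)"

definition gdist :: "'a set \<Rightarrow> ('a \<Rightarrow> 'a \<Rightarrow> bool) \<Rightarrow> 'a \<Rightarrow> 'a \<Rightarrow> nat" where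
  "gdist V E u v = (LEAST k. \<exists>xs. is_walk V E xs \<and> hd xs = u \<and> last xs = v \<and> length xs = Suc k)"

definition diameter :: "'a set \<Rightarrow> ('a \<Rightarrow> 'a \<Rightarrow> bool) \<Rightarrow> nat" where
  "diameter V E = Max {gdist V E u v | u v. u \<in> V \<and> v \<in> V}"

definition distance_regular :: "'a set \<Rightarrow> ('a \<Rightarrow> 'a \<Rightarrow> bool) \<Rightarrow> bool" where
  "distance_regular V E \<longleftrightarrow> simple_graph V E \<and> connected_graph V E \<and>
     (\<exists>c a b :: nat \<Rightarrow> nat. \<forall>v\<in>V. \<forall>w\<in>V.
        card {x \<in> V. E w x \<and> gdist V E v x + 1 = gdist V E v w} = c (gdist V E v w) \<and>
        card {x \<in> V. E w x \<and> gdist V E v x = gdist V E v w} = a (gdist V E v w) \<and>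
        card {x \<in> V. E w x \<and> gdist V E v x = gdist V E v w + 1} = b (gdist V E v w))"

definition bipartite :: "'a set \<Rightarrow> ('a \<Rightarrow> 'a \<Rightarrow> bool) \<Rightarrow> bool" where
  "bipartite V E \<longleftrightarrow> (\<exists>f :: 'a \<Rightarrow> bool. \<forall>u\<in>V. \<forall>v\<in>V. E u v \<longrightarrow> f u \<noteq> f v)"

definition antipodal :: "'a set \<Rightarrow> ('a \<Rightarrow> 'a \<Rightarrow> bool) \<Rightarrow> bool" where
  "antipodal V E \<longleftrightarrow> equiv V {(u, v). u \<in> V \<and> v \<in> V \<and> (u = v \<or> gdist V E u v = diameter V E)}"

definition automorphism :: "'a set \<Rightarrow> ('a \<Rightarrow> 'a \<Rightarrow> bool) \<Rightarrow> ('a \<Rightarrow> 'a) \<Rightarrow> bool" where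
  "automorphism V E \<sigma> \<longleftrightarrow> bij_betw \<sigma> V V \<and> (\<forall>u\<in>V. \<forall>v\<in>V. E (\<sigma> u) (\<sigma> v) \<longleftrightarrow> E u v)"

text \<open>Motion: minimum, over automorphisms that are not the identity on V, of the number of
non-fixed vertices; \<infinity> if there is no non-identity automorphism.\<close>
definition motion :: "'a set \<Rightarrow> ('a \<Rightarrow> 'a \<Rightarrow> bool) \<Rightarrow> enat" where
  "motion V E = (INF \<sigma> \<in> {\<sigma>. automorphism V E \<sigma> \<and> (\<exists>x\<in>V. \<sigma> x \<noteq> x)}.
                   enat (card {x \<in> V. \<sigma> x \<noteq> x}))"

end

theory Submission
  imports Defs
begin

lemma odd4: "(n::nat) \<le> 4 \<Longrightarrow> odd n \<Longrightarrow> n = 1 \<or> n = 3" by presburger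
lemma ev2: "(n::nat) \<le> 4 \<Longrightarrow> even n \<Longrightarrow> n \<noteq> 0 \<Longrightarrow> n \<noteq> 4 \<Longrightarrow> n = 2" by presburger
lemma ev3: "(n::nat) \<le> 2 \<Longrightarrow> even n \<Longrightarrow> n \<noteq> 2 \<Longrightarrow> n = 0" by presburger

lemma walk_single[simp]: "is_walk V E [x] \<longleftrightarrow> x \<in> V"
  by (auto simp: is_walk_def)

lemma walk_Cons2[simp]: "is_walk V E (x # y # ys) \<longleftrightarrow> x \<in> V \<and> E x y \<and> is_walk V E (y # ys)"
proof
  assume h: "is_walk V E (x # y # ys)"
  have "Suc 0 < length (x # y # ys)" by simp
  then have "E ((x # y # ys) ! 0) ((x # y # ys) ! Suc 0)" using h unfolding is_walk_def by blast
  then have "E x y" by simp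
  moreover have "\<forall>i. Suc i < length (y#ys) \<longrightarrow> E ((y#ys) ! i) ((y#ys) ! Suc i)"
  proof (intro allI impI)
    fix i assume "Suc i < length (y#ys)"
    then have "Suc (Suc i) < length (x#y#ys)" by simp
    with h have "E ((x#y#ys) ! Suc i) ((x#y#ys) ! Suc (Suc i))" unfolding is_walk_def by blast
    then show "E ((y#ys) ! i) ((y#ys) ! Suc i)" by simp
  qed
  ultimately show "x \<in> V \<and> E x y \<and> is_walk V E (y # ys)" using h unfolding is_walk_def by auto
next
  assume h: "x \<in> V \<and> E x y \<and> is_walk V E (y # ys)"
  show "is_walk V E (x # y # ys)" unfolding is_walk_def
  proof (intro conjI allI impI)
    show "set (x # y # ys) \<subseteq> V" using h unfolding is_walk_def by auto
    fix i assume i: "Suc i < length (x # y # ys)"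
    show "E ((x # y # ys) ! i) ((x # y # ys) ! Suc i)"
    proof (cases i)
      case 0 then show ?thesis using h by simp
    next
      case (Suc j)
      then have "Suc j < length (y#ys)" using i by simp
      then have "E ((y#ys) ! j) ((y#ys) ! Suc j)" using h unfolding is_walk_def by blast
      then show ?thesis using Suc by simp
    qed
  qed simp
qed

lemma walk_rev: "is_walk V E xs \<Longrightarrow> (\<forall>u v. E u v \<longrightarrow> E v u) \<Longrightarrow> is_walk V E (rev xs)"
proof (induction xs rule: induct_list012)
  case (3 x y zs)
  have "is_walk V E (rev (y # zs) @ [x])"
  proof -
    have w: "is_walk V E (rev (y#zs))" using 3 by simp
    show ?thesis unfolding is_walk_def
    proof (intro conjI allI impI)
      show "set (rev (y # zs) @ [x]) \<subseteq> V" using 3(3) w unfolding is_walk_def by auto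
      fix i assume i: "Suc i < length (rev (y # zs) @ [x])"
      show "E ((rev (y # zs) @ [x]) ! i) ((rev (y # zs) @ [x]) ! Suc i)"
      proof (cases "Suc i < length (rev (y#zs))")
        case True
        then have "E (rev (y # zs) ! i) (rev (y # zs) ! Suc i)" using w unfolding is_walk_def by blast
        then show ?thesis using True by (simp add: nth_append del: rev.simps)
      next
        case False
        then have "Suc i = length (rev (y#zs))" using i by simp
        then have "(rev (y # zs) @ [x]) ! i = y" "(rev (y # zs) @ [x]) ! Suc i = x"
          by (simp_all add: nth_append)
        then show ?thesis using 3 by auto
      qed
    qed simp
  qed
  then show ?case by simp
qed auto


lemma walk_prop:
  assumes "is_walk V E xs" "P (hd xs)" "\<And>a b. a \<in> V \<Longrightarrow> b \<in> V \<Longrightarrow> E a b \<Longrightarrow> P a \<Longrightarrow> P b"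
  shows "P (last xs)"
  using assms
proof (induction xs rule: induct_list012)
  case (3 x y zs)
  have "x \<in> V" "E x y" "y \<in> V" using 3(3) by (auto simp: is_walk_def)
  then have "P y" using 3(4) 3(5)[of x y] by simp
  then have "P (last (y#zs))" using 3 by simp
  then show ?case by simp
qed (auto simp: is_walk_def)

lemma walk_parity:
  fixes f :: "'a \<Rightarrow> bool"
  assumes "is_walk V E xs" "\<forall>u\<in>V. \<forall>v\<in>V. E u v \<longrightarrow> f u \<noteq> f v"
  shows "(f (hd xs) = f (last xs)) \<longleftrightarrow> even (length xs - 1)"
  using assms
proof (induction xs rule: induct_list012)
  case (3 x y zs)
  have "x \<in> V" "y \<in> V" "E x y" using 3(3) by (auto simp: is_walk_def)
  then have "f x \<noteq> f y" using 3(4) by blast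
  moreover have "(f y = f (last (y#zs))) \<longleftrightarrow> even (length (y#zs) - 1)" using 3 by simp
  ultimately show ?case by (cases "f x"; cases "f y"; cases "f (last (y#zs))") auto
qed (auto simp: is_walk_def)

lemma walk_map:
  assumes "is_walk V E xs" "automorphism V E \<sigma>"
  shows "is_walk V E (map \<sigma> xs)"
proof -
  have bij: "bij_betw \<sigma> V V" and pres: "\<forall>u\<in>V. \<forall>v\<in>V. E (\<sigma> u) (\<sigma> v) \<longleftrightarrow> E u v"
    using assms(2) by (auto simp: automorphism_def)
  have sV: "set xs \<subseteq> V" using assms(1) by (simp add: is_walk_def)
  show ?thesis unfolding is_walk_def
  proof (intro conjI allI impI)
    show "map \<sigma> xs \<noteq> []" using assms(1) by (simp add: is_walk_def)
    show "set (map \<sigma> xs) \<subseteq> V" using sV bij bij_betw_imp_surj_on by fastforce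
    fix i assume i: "Suc i < length (map \<sigma> xs)"
    then have "xs ! i \<in> V" "xs ! Suc i \<in> V" using sV by auto
    moreover have "E (xs ! i) (xs ! Suc i)" using assms(1) i by (simp add: is_walk_def)
    ultimately show "E (map \<sigma> xs ! i) (map \<sigma> xs ! Suc i)" using pres i by simp
  qed
qed

lemma aut_inv:
  assumes "automorphism V E \<sigma>"
  shows "automorphism V E (inv_into V \<sigma>)"
proof -
  have bij: "bij_betw \<sigma> V V" and pres: "\<forall>u\<in>V. \<forall>v\<in>V. E (\<sigma> u) (\<sigma> v) \<longleftrightarrow> E u v"
    using assms by (auto simp: automorphism_def)
  have b2: "bij_betw (inv_into V \<sigma>) V V" using bij by (simp add: bij_betw_inv_into)
  have "\<forall>u\<in>V. \<forall>v\<in>V. E (inv_into V \<sigma> u) (inv_into V \<sigma> v) \<longleftrightarrow> E u v"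
  proof (intro ballI)
    fix u v assume "u \<in> V" "v \<in> V"
    then have "inv_into V \<sigma> u \<in> V" "inv_into V \<sigma> v \<in> V" "\<sigma> (inv_into V \<sigma> u) = u" "\<sigma> (inv_into V \<sigma> v) = v"
      using b2 bij by (auto simp: bij_betw_def f_inv_into_f)
    then show "E (inv_into V \<sigma> u) (inv_into V \<sigma> v) \<longleftrightarrow> E u v" using pres by metis
  qed
  then show ?thesis using b2 by (simp add: automorphism_def)
qed

locale sg =
  fixes V :: "'a set" and E :: "'a \<Rightarrow> 'a \<Rightarrow> bool"
  assumes sg: "simple_graph V E" and conn: "connected_graph V E"
begin

lemma finV: "finite V" using sg by (simp add: simple_graph_def)
lemma EV: "E u v \<Longrightarrow> u \<in> V \<and> v \<in> V" using sg by (simp add: simple_graph_def)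
lemma Esym: "E u v \<Longrightarrow> E v u" using sg by (simp add: simple_graph_def)
lemma Eirr: "\<not> E u u" using sg by (simp add: simple_graph_def)

abbreviation "d \<equiv> gdist V E"

lemma gdist_walk:
  assumes "u \<in> V" "v \<in> V"
  shows "\<exists>xs. is_walk V E xs \<and> hd xs = u \<and> last xs = v \<and> length xs = Suc (d u v)"
proof -
  obtain xs where xs: "is_walk V E xs" "hd xs = u" "last xs = v"
    using conn assms by (auto simp: connected_graph_def)
  then have "length xs = Suc (length xs - 1)" by (cases xs) (auto simp: is_walk_def)
  with xs have "\<exists>k xs. is_walk V E xs \<and> hd xs = u \<and> last xs = v \<and> length xs = Suc k" by blast
  then show ?thesis unfolding gdist_def by (rule LeastI_ex)
qed

lemma gdist_le:
  assumes "is_walk V E xs" "hd xs = u" "last xs = v"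
  shows "d u v \<le> length xs - 1"
proof -
  have "length xs = Suc (length xs - 1)" using assms by (cases xs) (auto simp: is_walk_def)
  with assms show ?thesis unfolding gdist_def by (metis (mono_tags, lifting) Least_le)
qed

lemma gdist_refl: "u \<in> V \<Longrightarrow> d u u = 0"
  using gdist_le[of "[u]" u u] by simp

lemma gdist_eq0: assumes "u \<in> V" "v \<in> V" "d u v = 0" shows "u = v"
proof -
  obtain xs where "is_walk V E xs" "hd xs = u" "last xs = v" "length xs = 1"
    using gdist_walk[OF assms(1,2)] assms(3) by auto
  then show ?thesis by (cases xs) auto
qed

lemma gdist_step: assumes "E w x" "u \<in> V" shows "d w u \<le> Suc (d x u)"
proof -
  have "x \<in> V" "w \<in> V" using EV assms by auto
  then obtain xs where xs: "is_walk V E xs" "hd xs = x" "last xs = u" "length xs = Suc (d x u)"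
    using gdist_walk assms by blast
  then obtain ys where ys: "xs = x # ys" by (cases xs) (auto simp: is_walk_def)
  have "is_walk V E (w # xs)" using xs ys assms \<open>w \<in> V\<close> by simp
  from gdist_le[OF this] show ?thesis using xs ys by simp
qed

lemma gdist_pred: assumes "w \<in> V" "u \<in> V" "d w u = Suc i" shows "\<exists>x\<in>V. E w x \<and> d x u = i"
proof -
  obtain xs where xs: "is_walk V E xs" "hd xs = w" "last xs = u" "length xs = Suc (Suc i)"
    using gdist_walk assms by metis
  then obtain x ys where ys: "xs = w # x # ys" by (cases xs; cases "tl xs") auto
  have w2: "is_walk V E (x # ys)" "E w x" "x \<in> V" using xs ys EV by auto
  have "d x u \<le> i" using gdist_le[OF w2(1)] xs ys by simp
  moreover have "d w u \<le> Suc (d x u)" using gdist_step w2 assms by blast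
  ultimately show ?thesis using w2 assms by auto
qed

lemma gdist_sym_le: assumes "u \<in> V" "v \<in> V" shows "d v u \<le> d u v"
proof -
  obtain xs where xs: "is_walk V E xs" "hd xs = u" "last xs = v" "length xs = Suc (d u v)"
    using gdist_walk assms by blast
  have "is_walk V E (rev xs)" using walk_rev xs(1) Esym by blast
  moreover have "xs \<noteq> []" using xs by auto
  ultimately show ?thesis using gdist_le[of "rev xs" v u] xs by (simp add: hd_rev last_rev)
qed

lemma gdist_sym: "u \<in> V \<Longrightarrow> v \<in> V \<Longrightarrow> d u v = d v u"
  using gdist_sym_le by (simp add: le_antisym)

lemma gdist_adj: assumes "E u v" shows "d u v = 1"
proof -
  have V: "u \<in> V" "v \<in> V" using EV assms by auto
  have "d u v \<le> 1" using gdist_step[OF assms V(2)] gdist_refl V by simp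
  moreover have "d u v \<noteq> 0" using gdist_eq0 V Eirr assms by blast
  ultimately show ?thesis by simp
qed

lemma gdist_1: assumes "u \<in> V" "v \<in> V" "d u v = 1" shows "E u v"
  using gdist_pred[of u v 0] assms gdist_eq0 by auto

lemma gdist_parity:
  fixes f :: "'a \<Rightarrow> bool"
  assumes "u \<in> V" "v \<in> V" "\<forall>u\<in>V. \<forall>v\<in>V. E u v \<longrightarrow> f u \<noteq> f v"
  shows "even (d u v) \<longleftrightarrow> f u = f v"
proof -
  obtain xs where xs: "is_walk V E xs" "hd xs = u" "last xs = v" "length xs = Suc (d u v)"
    using gdist_walk assms by blast
  show ?thesis using walk_parity[OF xs(1) assms(3)] xs by simp
qed

lemma gdist_aut_le:
  assumes "automorphism V E \<sigma>" "u \<in> V" "v \<in> V"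
  shows "d (\<sigma> u) (\<sigma> v) \<le> d u v"
proof -
  obtain xs where xs: "is_walk V E xs" "hd xs = u" "last xs = v" "length xs = Suc (d u v)"
    using gdist_walk assms by blast
  have "xs \<noteq> []" using xs by auto
  then show ?thesis using gdist_le[OF walk_map[OF xs(1) assms(1)]] xs by (simp add: hd_map last_map)
qed

lemma gdist_aut:
  assumes "automorphism V E \<sigma>" "u \<in> V" "v \<in> V"
  shows "d (\<sigma> u) (\<sigma> v) = d u v"
proof -
  have bij: "bij_betw \<sigma> V V" using assms by (simp add: automorphism_def)
  have V: "\<sigma> u \<in> V" "\<sigma> v \<in> V" using bij assms bij_betw_apply by fastforce+
  have "inv_into V \<sigma> (\<sigma> u) = u" "inv_into V \<sigma> (\<sigma> v) = v" using bij assms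
    by (auto simp: bij_betw_def)
  then have "d u v \<le> d (\<sigma> u) (\<sigma> v)" using gdist_aut_le[OF aut_inv[OF assms(1)] V] by simp
  then show ?thesis using gdist_aut_le[OF assms] by simp
qed

end


locale ba = sg +
  fixes f :: "'a \<Rightarrow> bool" and c b :: "nat \<Rightarrow> nat"
  assumes bip: "\<forall>u\<in>V. \<forall>v\<in>V. E u v \<longrightarrow> f u \<noteq> f v"
  and cc: "\<forall>v\<in>V. \<forall>w\<in>V. card {x\<in>V. E w x \<and> d v x + 1 = d v w} = c (d v w)"
  and bb: "\<forall>v\<in>V. \<forall>w\<in>V. card {x\<in>V. E w x \<and> d v x = d v w + 1} = b (d v w)"
  and diam: "diameter V E = 4"
  and ant: "antipodal V E"
begin

lemma par: "u \<in> V \<Longrightarrow> v \<in> V \<Longrightarrow> even (d u v) \<longleftrightarrow> f u = f v"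
  using gdist_parity bip by blast

lemma Dfin: "finite {d u v |u v. u \<in> V \<and> v \<in> V}"
proof -
  have "{d u v |u v. u \<in> V \<and> v \<in> V} = (\<lambda>(u,v). d u v) ` (V \<times> V)" by auto
  then show ?thesis using finV by simp
qed

lemma dle4: assumes "u \<in> V" "v \<in> V" shows "d u v \<le> 4"
proof -
  have "d u v \<in> {d u v |u v. u \<in> V \<and> v \<in> V}" using assms by blast
  from Max_ge[OF Dfin this] show ?thesis using diam unfolding diameter_def by simp
qed

lemma ex4: "\<exists>p\<in>V. \<exists>q\<in>V. d p q = 4"
proof -
  have "V \<noteq> {}" using sg by (simp add: simple_graph_def)
  then have "{d u v |u v. u \<in> V \<and> v \<in> V} \<noteq> {}" by blast
  from Max_in[OF Dfin this] diam show ?thesis unfolding diameter_def by auto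
qed

lemma an_trans:
  assumes "a \<in> V" "a' \<in> V" "a'' \<in> V" "a = a' \<or> d a a' = 4" "a' = a'' \<or> d a' a'' = 4"
  shows "a = a'' \<or> d a a'' = 4"
proof -
  let ?R = "{(u, v). u \<in> V \<and> v \<in> V \<and> (u = v \<or> gdist V E u v = diameter V E)}"
  have "trans ?R" using ant by (simp add: antipodal_def equiv_def)
  moreover have "(a,a') \<in> ?R" "(a',a'') \<in> ?R" using assms diam by auto
  ultimately have "(a,a'') \<in> ?R" by (meson transD)
  then show ?thesis using diam by auto
qed

lemma an_sym: "a \<in> V \<Longrightarrow> a' \<in> V \<Longrightarrow> a = a' \<or> d a a' = 4 \<Longrightarrow> a' = a \<or> d a' a = 4"
  using gdist_sym by auto

lemma deg: "w \<in> V \<Longrightarrow> card {x\<in>V. E w x} = b 0"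
proof -
  assume w: "w \<in> V"
  have "{x\<in>V. E w x \<and> d w x = d w w + 1} = {x\<in>V. E w x}"
    using gdist_adj gdist_refl[OF w] by auto
  then show ?thesis using bb w gdist_refl[OF w] by metis
qed

lemma c2: assumes "v \<in> V" "w \<in> V" "d v w = 2" shows "card {x\<in>V. E w x \<and> E v x} = c 2"
proof -
  have "{x\<in>V. E w x \<and> d v x + 1 = d v w} = {x\<in>V. E w x \<and> E v x}"
    using gdist_adj gdist_1 assms by auto
  then show ?thesis using cc assms by metis
qed

lemma reach: "\<forall>m\<le>4. \<exists>p\<in>V. \<exists>y\<in>V. d p y = 4 - m"
proof (intro allI impI)
  fix m :: nat assume "m \<le> 4"
  then show "\<exists>p\<in>V. \<exists>y\<in>V. d p y = 4 - m"
  proof (induction m)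
    case 0 then show ?case using ex4 by auto
  next
    case (Suc m)
    then obtain p y where py: "p \<in> V" "y \<in> V" "d p y = 4 - m" by auto
    then have "d y p = Suc (4 - Suc m)" using Suc gdist_sym by auto
    then obtain z where z: "z \<in> V" "E y z" "d z p = 4 - Suc m" using gdist_pred py by blast
    then have "d p z = 4 - Suc m" using gdist_sym py by auto
    then show ?case using py z by blast
  qed
qed

lemma bpos: assumes "i < 4" shows "b i > 0"
proof -
  have "3 - i \<le> 4" "4 - (3 - i) = Suc i" using assms by arith+
  then obtain p y where py: "p \<in> V" "y \<in> V" "d p y = Suc i"
    using reach[rule_format, of "3 - i"] by auto
  then have "d y p = Suc i" using gdist_sym by auto
  then obtain w where w: "w \<in> V" "E y w" "d w p = i" using gdist_pred py by blast
  then have dw: "d p w = i" using gdist_sym py by auto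
  have "y \<in> {x\<in>V. E w x \<and> d p x = d p w + 1}" using w dw py Esym by auto
  moreover have "finite {x\<in>V. E w x \<and> d p x = d p w + 1}" using finV by auto
  ultimately have "card {x\<in>V. E w x \<and> d p x = d p w + 1} > 0" using card_gt_0_iff by blast
  then show ?thesis using bb py(1) w(1) dw by metis
qed

lemma nb_up: assumes "u \<in> V" "y \<in> V" "d u y = i" "i < 4" shows "\<exists>z\<in>V. E y z \<and> d u z = i + 1"
proof -
  have "card {x\<in>V. E y x \<and> d u x = d u y + 1} > 0" using bb assms bpos by metis
  then have "{x\<in>V. E y x \<and> d u x = d u y + 1} \<noteq> {}" by (metis card.empty less_irrefl)
  then show ?thesis using assms by auto
qed

lemma sphere: assumes "u \<in> V" "i \<le> 4" shows "\<exists>x\<in>V. d u x = i"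
  using assms(2)
proof (induction i)
  case 0 then show ?case using assms gdist_refl by auto
next
  case (Suc i)
  then obtain x where "x \<in> V" "d u x = i" by auto
  then show ?case using nb_up[of u x i] Suc assms by auto
qed

lemma cover:
  assumes "z \<in> V" "y \<in> V" "f y \<noteq> f z"
  shows "\<exists>a\<in>V. (a = z \<or> d z a = 4) \<and> E a y"
proof -
  have o: "odd (d z y)" using par assms by auto
  have "d z y \<le> 4" using dle4 assms by auto
  then have "d z y = 1 \<or> d z y = 3" using odd4 o by blast
  then show ?thesis
  proof
    assume "d z y = 1" then show ?thesis using gdist_1 assms by auto
  next
    assume "d z y = 3"
    then obtain x where "x \<in> V" "E y x" "d z x = 4" using nb_up[of z y 3] assms by auto
    then show ?thesis using Esym by auto
  qed
qed

lemma fib_disj: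
  assumes "z \<in> V" "a \<in> V" "a' \<in> V" "a = z \<or> d z a = 4" "a' = z \<or> d z a' = 4" "a \<noteq> a'"
    "E a y" "E a' y"
  shows False
proof -
  have "a = a' \<or> d a a' = 4" using an_trans[of a z a'] an_sym assms by blast
  then have "d a a' = 4" using assms by auto
  moreover have "d a a' \<le> Suc (d y a')" using gdist_step assms by blast
  moreover have "d y a' = 1" using gdist_adj Esym assms by blast
  ultimately show False by simp
qed


lemma exists2:
  assumes aut: "automorphism V E \<sigma>" and x: "x \<in> V" "\<sigma> x = x" and mv: "y0 \<in> V" "\<sigma> y0 \<noteq> y0"
  shows "\<exists>u\<in>V. d u (\<sigma> u) = 2"
proof (rule ccontr)
  assume nt: "\<not> (\<exists>u\<in>V. d u (\<sigma> u) = 2)"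
  have bij: "bij_betw \<sigma> V V" and pres: "\<forall>u\<in>V. \<forall>v\<in>V. E (\<sigma> u) (\<sigma> v) \<longleftrightarrow> E u v"
    using aut by (auto simp: automorphism_def)
  have sV: "\<And>u. u \<in> V \<Longrightarrow> \<sigma> u \<in> V" using bij bij_betw_apply by fastforce
  have ev: "even (d u (\<sigma> u))" if u: "u \<in> V" for u
  proof -
    have "d x (\<sigma> u) = d x u" using gdist_aut[OF aut x(1) u] x by simp
    then have "f x = f u \<longleftrightarrow> f x = f (\<sigma> u)" using par x u sV by metis
    then have "f u = f (\<sigma> u)" by auto
    then show ?thesis using par u sV by blast
  qed
  have step: "\<sigma> bb = bb" if "aa \<in> V" "bb \<in> V" "E aa bb" "\<sigma> aa = aa" for aa bb
  proof -
    have e: "E aa (\<sigma> bb)" using pres that by metis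
    have "d bb (\<sigma> bb) \<le> Suc (d aa (\<sigma> bb))" using gdist_step Esym that sV by blast
    also have "d aa (\<sigma> bb) = 1" using gdist_adj e by blast
    finally have "d bb (\<sigma> bb) \<le> 2" by simp
    moreover have "d bb (\<sigma> bb) \<noteq> 2" using nt that by blast
    moreover have "even (d bb (\<sigma> bb))" using ev that by blast
    ultimately have "d bb (\<sigma> bb) = 0" using ev3 by blast
    then show ?thesis using gdist_eq0 that sV by metis
  qed
  obtain xs where xs: "is_walk V E xs" "hd xs = x" "last xs = y0"
    using gdist_walk x mv by blast
  have "\<sigma> (last xs) = last xs"
    by (rule walk_prop[OF xs(1), where P = "\<lambda>y. \<sigma> y = y"]) (use xs x step in auto)
  then show False using xs mv by simp
qed

lemma main_fixed:
  assumes aut: "automorphism V E \<sigma>" and x: "x \<in> V" "\<sigma> x = x" and mv: "y0 \<in> V" "\<sigma> y0 \<noteq> y0"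
  shows "3 * card V \<le> 20 * card {y\<in>V. \<sigma> y \<noteq> y}"
proof -
  have bij: "bij_betw \<sigma> V V" and pres: "\<forall>u\<in>V. \<forall>v\<in>V. E (\<sigma> u) (\<sigma> v) \<longleftrightarrow> E u v"
    using aut by (auto simp: automorphism_def)
  have sV: "\<And>u. u \<in> V \<Longrightarrow> \<sigma> u \<in> V" using bij bij_betw_apply by fastforce
  obtain u where u: "u \<in> V" "d u (\<sigma> u) = 2" using exists2 assms by blast
  define k where "k = b 0"
  define \<mu> where "\<mu> = c 2"
  define N where "N = (\<lambda>a. {y\<in>V. E a y})"
  define F where "F = {a\<in>V. a = u \<or> d u a = 4}"
  define S where "S = {y\<in>V. \<sigma> y \<noteq> y}"
  define A where "A = {y\<in>V. f y = f u}"
  define B where "B = {y\<in>V. f y \<noteq> f u}"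
  have finF: "finite F" using finV by (simp add: F_def)
  have finN: "\<And>a. finite (N a)" using finV by (simp add: N_def)
  have cardN: "\<And>a. a \<in> V \<Longrightarrow> card (N a) = k" using deg by (simp add: N_def k_def)
  have sv: "\<sigma> u \<in> V" using sV u by blast
  have fsu: "f (\<sigma> u) = f u" using par[OF u(1) sv] u(2) by simp
  have d2: "d a (\<sigma> a) = 2" if a: "a \<in> F" for a
  proof -
    have aV: "a \<in> V" and au: "a = u \<or> d u a = 4" using a by (auto simp: F_def)
    have saV: "\<sigma> a \<in> V" using sV aV by blast
    have "d (\<sigma> u) (\<sigma> a) = d u a" using gdist_aut aut u aV by blast
    then have av: "\<sigma> u = \<sigma> a \<or> d (\<sigma> u) (\<sigma> a) = 4" using au by auto
    have "even (d u a)" using au gdist_refl u by auto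
    then have "f a = f u" using par u aV by blast
    moreover have "even (d (\<sigma> u) (\<sigma> a))" using \<open>d (\<sigma> u) (\<sigma> a) = d u a\<close> \<open>even (d u a)\<close> by simp
    then have "f (\<sigma> a) = f u" using par sv saV fsu by blast
    ultimately have ev: "even (d a (\<sigma> a))" using par aV saV by blast
    have not_an: "\<not> (a = \<sigma> a \<or> d a (\<sigma> a) = 4)"
    proof
      assume h: "a = \<sigma> a \<or> d a (\<sigma> a) = 4"
      have au': "u = a \<or> d u a = 4" using au by auto
      have h1: "u = \<sigma> a \<or> d u (\<sigma> a) = 4" using an_trans[OF u(1) aV saV au' h] .
      have h2: "\<sigma> a = \<sigma> u \<or> d (\<sigma> a) (\<sigma> u) = 4" using an_sym[OF sv saV av] .
      have "u = \<sigma> u \<or> d u (\<sigma> u) = 4" using an_trans[OF u(1) saV sv h1 h2] .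
      then show False using u gdist_refl by auto
    qed
    have "d a (\<sigma> a) \<le> 4" using dle4 aV saV by blast
    moreover have "d a (\<sigma> a) \<noteq> 0" using gdist_eq0 aV saV not_an by blast
    ultimately show ?thesis using ev not_an ev2 by blast
  qed
  define D where "D = (\<lambda>a. N a - N (\<sigma> a))"
  have cardD: "card (D a) = k - \<mu>" if a: "a \<in> F" for a
  proof -
    have aV: "a \<in> V" using a by (simp add: F_def)
    have "N a \<inter> N (\<sigma> a) = {x\<in>V. E (\<sigma> a) x \<and> E a x}" by (auto simp: N_def)
    then have "card (N a \<inter> N (\<sigma> a)) = \<mu>" using c2[OF aV sV[OF aV] d2[OF a]] by (simp add: \<mu>_def)
    then show ?thesis using card_Diff_subset_Int[of "N a" "N (\<sigma> a)"] finN cardN aV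
      by (simp add: D_def Diff_Int2 inf_commute)
  qed
  have DS: "D a \<subseteq> S" if a: "a \<in> F" for a
  proof
    fix y assume y: "y \<in> D a"
    have aV: "a \<in> V" using a by (simp add: F_def)
    have yV: "y \<in> V" "E a y" "\<not> E (\<sigma> a) y" using y by (auto simp: D_def N_def)
    have "\<sigma> y \<noteq> y"
    proof
      assume "\<sigma> y = y"
      then have "E (\<sigma> a) y" using pres aV yV by metis
      then show False using yV by blast
    qed
    then show "y \<in> S" using yV by (simp add: S_def)
  qed
  have disjN: "N a \<inter> N a' = {}" if "a \<in> F" "a' \<in> F" "a \<noteq> a'" for a a'
    using fib_disj[OF u(1), of a a'] that by (auto simp: F_def N_def)
  have "card (\<Union>a\<in>F. D a) = (\<Sum>a\<in>F. card (D a))"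
  proof (rule card_UN_disjoint[OF finF])
    show "\<forall>i\<in>F. finite (D i)" using finN by (simp add: D_def)
    show "\<forall>i\<in>F. \<forall>j\<in>F. i \<noteq> j \<longrightarrow> D i \<inter> D j = {}" using disjN by (auto simp: D_def)
  qed
  also have "\<dots> = card F * (k - \<mu>)" using cardD by simp
  finally have S1: "card F * (k - \<mu>) \<le> card S"
    using card_mono[of S "\<Union>a\<in>F. D a"] DS finV by (auto simp: S_def)
  obtain u' where u': "u' \<in> V" "d u u' = 4" using sphere u by blast
  define p where "p = \<sigma> u"
  have pV: "p \<in> V" using sv p_def by simp
  have dup: "d u p = 2" using u p_def by simp
  have "d u' p = 2"
  proof -
    have "f u' = f u" using par[OF u(1) u'(1)] u'(2) by simp
    moreover have "f p = f u" using fsu p_def by simp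
    ultimately have ev: "even (d u' p)" using par u' pV by auto
    have ne0: "d u' p \<noteq> 0"
    proof
      assume "d u' p = 0" then have "u' = p" using gdist_eq0 u' pV by blast
      then show False using u' dup by simp
    qed
    have ne4: "d u' p \<noteq> 4"
    proof
      assume "d u' p = 4"
      then have "u = p \<or> d u p = 4" using an_trans[OF u(1) u'(1) pV] u' by blast
      then show False using dup gdist_refl u by auto
    qed
    show ?thesis using ev ne0 ne4 dle4[OF u'(1) pV] ev2 by blast
  qed
  have c1: "card (N p \<inter> N u) = \<mu>"
  proof -
    have "N p \<inter> N u = {x\<in>V. E p x \<and> E u x}" by (auto simp: N_def)
    then show ?thesis using c2[OF u(1) pV dup] by (simp add: \<mu>_def)
  qed
  have c1': "card (N p \<inter> N u') = \<mu>"
  proof -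
    have "N p \<inter> N u' = {x\<in>V. E p x \<and> E u' x}" by (auto simp: N_def)
    then show ?thesis using c2[OF u'(1) pV \<open>d u' p = 2\<close>] by (simp add: \<mu>_def)
  qed
  have uu': "u \<noteq> u'" using u' gdist_refl u by auto
  have "N u \<inter> N u' = {}" using fib_disj[OF u(1) u(1) u'(1)] u' uu' by (auto simp: N_def)
  then have "card ((N p \<inter> N u) \<union> (N p \<inter> N u')) = \<mu> + \<mu>"
    using card_Un_disjoint[of "N p \<inter> N u" "N p \<inter> N u'"] finN c1 c1' by auto
  moreover have "card ((N p \<inter> N u) \<union> (N p \<inter> N u')) \<le> card (N p)"
    by (rule card_mono) (use finN in auto)
  ultimately have mu: "2 * \<mu> \<le> k" using cardN pV by simp
  have coverN: "{y\<in>V. f y \<noteq> f z} \<subseteq> (\<Union>a\<in>{a\<in>V. a = z \<or> d z a = 4}. N a)" if "z \<in> V" for z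
    using cover[OF that] by (fastforce simp: N_def)
  have UNle: "card (\<Union>a\<in>G. N a) \<le> card G * k" if "G \<subseteq> V" "finite G" for G
  proof -
    have "card (\<Union>a\<in>G. N a) \<le> (\<Sum>a\<in>G. card (N a))" by (rule card_UN_le[OF that(2)])
    also have "\<dots> = card G * k" using cardN that(1) by (simp add: subset_iff)
    finally show ?thesis .
  qed
  have Bb: "card B \<le> card F * k"
  proof -
    have "card B \<le> card (\<Union>a\<in>F. N a)"
      using coverN[OF u(1)] finN finF by (intro card_mono) (auto simp: B_def F_def)
    also have "\<dots> \<le> card F * k" using UNle finF by (auto simp: F_def)
    finally show ?thesis .
  qed
  have "k > 0" using bpos by (simp add: k_def)
  then have "N u \<noteq> {}" using cardN[OF u(1)] by (metis card.empty less_irrefl)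
  then obtain w where w: "w \<in> V" "E u w" by (auto simp: N_def)
  have fw: "f w \<noteq> f u" using bip w u by blast
  define F' where "F' = {a\<in>V. a = w \<or> d w a = 4}"
  have finF': "finite F'" using finV by (simp add: F'_def)
  have Ab: "card A \<le> card F' * k"
  proof -
    have "A \<subseteq> {y\<in>V. f y \<noteq> f w}" using fw by (auto simp: A_def)
    then have "card A \<le> card (\<Union>a\<in>F'. N a)"
      using coverN[OF w(1)] finN finF' by (intro card_mono) (auto simp: F'_def)
    also have "\<dots> \<le> card F' * k" using UNle finF' by (auto simp: F'_def)
    finally show ?thesis .
  qed
  have FF: "card F' \<le> card F"
  proof -
    define g where "g = (\<lambda>bb. SOME a. a \<in> F \<and> E a bb)"
    have gp: "g bb \<in> F \<and> E (g bb) bb" if "bb \<in> F'" for bb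
    proof -
      have bV: "bb \<in> V" and bw: "bb = w \<or> d w bb = 4" using that by (auto simp: F'_def)
      have "even (d w bb)" using bw gdist_refl w by auto
      then have "f bb = f w" using par w bV by blast
      then have "f bb \<noteq> f u" using fw by simp
      then have "\<exists>a. a \<in> F \<and> E a bb" using cover[OF u(1) bV] by (auto simp: F_def)
      then show ?thesis unfolding g_def by (rule someI_ex)
    qed
    have "inj_on g F'"
    proof (rule inj_onI)
      fix b1 b2 assume h: "b1 \<in> F'" "b2 \<in> F'" "g b1 = g b2"
      show "b1 = b2"
      proof (rule ccontr)
        assume ne: "b1 \<noteq> b2"
        have "E b1 (g b1)" "E b2 (g b1)" using gp h Esym by metis+
        then show False using fib_disj[OF w(1), of b1 b2 "g b1"] h ne by (auto simp: F'_def)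
      qed
    qed
    moreover have "g ` F' \<subseteq> F" using gp by auto
    ultimately show ?thesis using card_inj_on_le finF by blast
  qed
  have "V = A \<union> B" "A \<inter> B = {}" by (auto simp: A_def B_def)
  then have "card V = card A + card B" using card_Un_disjoint finV
    by (metis finite_Un)
  moreover have "card F' * k \<le> card F * k" using FF by simp
  ultimately have nV: "card V \<le> 2 * (card F * k)" using Ab Bb by linarith
  have True
    by simp
  have "card F * k \<le> 2 * (card F * (k - \<mu>))"
  proof -
    have "k \<le> 2 * (k - \<mu>)" using mu by simp
    then have "card F * k \<le> card F * (2 * (k - \<mu>))" by simp
    then show ?thesis by (simp add: algebra_simps)
  qed
  then have "3 * card V \<le> 20 * card S" using nV S1 by linarith
  then show ?thesis by (simp add: S_def)
qed

lemma main:
  assumes aut: "automorphism V E \<sigma>" and mv: "y0 \<in> V" "\<sigma> y0 \<noteq> y0"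
  shows "3 * card V \<le> 20 * card {y\<in>V. \<sigma> y \<noteq> y}"
proof (cases "\<exists>x\<in>V. \<sigma> x = x")
  case True then show ?thesis using main_fixed assms by blast
next
  case False
  then have "{y\<in>V. \<sigma> y \<noteq> y} = V" by auto
  then show ?thesis by simp
qed

end


theorem proposition5p6:
  fixes V :: "'a set" and E :: "'a \<Rightarrow> 'a \<Rightarrow> bool" and n :: nat
  assumes "distance_regular V E"
    and "diameter V E = 4"
    and "bipartite V E"
    and "antipodal V E"
    and "n = card V"
  shows "3 * enat n \<le> 20 * motion V E"
proof -
  obtain c a b :: "nat \<Rightarrow> nat" where cab: "\<forall>v\<in>V. \<forall>w\<in>V.
        card {x \<in> V. E w x \<and> gdist V E v x + 1 = gdist V E v w} = c (gdist V E v w) \<and>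
        card {x \<in> V. E w x \<and> gdist V E v x = gdist V E v w} = a (gdist V E v w) \<and>
        card {x \<in> V. E w x \<and> gdist V E v x = gdist V E v w + 1} = b (gdist V E v w)"
    and sgc: "simple_graph V E" "connected_graph V E"
    using assms(1) unfolding distance_regular_def by blast
  obtain f :: "'a \<Rightarrow> bool" where f: "\<forall>u\<in>V. \<forall>v\<in>V. E u v \<longrightarrow> f u \<noteq> f v"
    using assms(3) unfolding bipartite_def by blast
  have cc: "\<forall>v\<in>V. \<forall>w\<in>V. card {x \<in> V. E w x \<and> gdist V E v x + 1 = gdist V E v w} = c (gdist V E v w)"
    using cab by blast
  have bb: "\<forall>v\<in>V. \<forall>w\<in>V. card {x \<in> V. E w x \<and> gdist V E v x = gdist V E v w + 1} = b (gdist V E v w)"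
    using cab by blast
  interpret ba V E f c b
    by (rule ba.intro[OF sg.intro[OF sgc] ba_axioms.intro[OF f cc bb assms(2) assms(4)]])
  define m where "m = (LEAST m. 3 * n \<le> 20 * m)"
  have mex: "\<exists>m. 3 * n \<le> 20 * m" by (rule exI[of _ n]) simp
  have "enat m \<le> motion V E"
    unfolding motion_def
  proof (rule INF_greatest)
    fix \<sigma> assume "\<sigma> \<in> {\<sigma>. automorphism V E \<sigma> \<and> (\<exists>x\<in>V. \<sigma> x \<noteq> x)}"
    then have "3 * n \<le> 20 * card {x \<in> V. \<sigma> x \<noteq> x}" using main assms(5) by blast
    then have "m \<le> card {x \<in> V. \<sigma> x \<noteq> x}" unfolding m_def by (rule Least_le)
    then show "enat m \<le> enat (card {x \<in> V. \<sigma> x \<noteq> x})" by simp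
  qed
  then have h2: "20 * enat m \<le> 20 * motion V E" by (rule mult_left_mono) simp
  have h1: "3 * enat n \<le> 20 * enat m"
  proof -
    have "3 * n \<le> 20 * m" unfolding m_def by (rule LeastI_ex[OF mex])
    then show ?thesis by (simp add: numeral_eq_enat)
  qed
  show ?thesis using order_trans[OF h1 h2] .
qed

end
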